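(* Let $\mathcal P$ be a compact parameter set with probability distribution $\mathbb P$, and for each $P\in\mathcal P$ let the quadratic program $J^*(P)=\min_U\{p(P;U): H(P)U\le h(P)\}$ be feasible with finite optimal value, with $p(P;U):=\tfrac12 U^\top Q(P)U+c(P)^\top U$ and dual function $d(P;\lambda)$. Let $\tilde U$ and $\tilde\lambda$ be fixed maps on $\mathcal P$ (independent of the verification samples). Given $\epsilon\in(0,1)$, $\beta\in(0,1)$, $\gamma>0$, choose $\epsilon_p,\epsilon_d>0$ with $\epsilon_p+\epsilon_d=\epsilon$, $\beta_p,\beta_d>0$ with $\beta_p+\beta_d=\beta$, $\gamma_p,\gamma_d>0$ with $\gamma_p+\gamma_d=\gamma$, and integers $N_p\ge \ln(1/\beta_p)/\ln(1/(1-\epsilon_p))$, $N_d\ge \ln(1/\beta_d)/\ln(1/(1-\epsilon_d))$. Draw independent samples $P^{(1)},\dots,P^{(N_p)}$ (primal) and $\bar P^{(1)},\dots,\bar P^{(N_d)}$ (dual), all i.i.d. according to $\mathbb P$. Then, with probability at least $1-\beta$ over these samples, the following holds: if $$H(P^{(i)})\tilde U(P^{(i)})\le h(P^{(i)}),\quad p(P^{(i)};\tilde U(P^{(i)}))\le J^*(P^{(i)})+\gamma_p\quad (i=1,\dots,N_p)$$ and $$\tilde\lambda(\bar P^{(j)})\ge0,\quad d(\bar P^{(j)};\tilde\lambda(\bar P^{(j)}))\ge J^*(\bar P^{(j)})-\gamma_d\quad (j=1,\dots,N_d),$$ then $$\mathbb P\big[\,H(P)\tilde U(P)\le h(P),\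 \tilde\lambda(P)\ge0,\ p(P;\tilde U(P))-d(P;\tilde\lambda(P))\le\gamma\,\big]\ \ge\ 1-\epsilon.$$
   Context: $Q(P)$ is symmetric positive definite, $c(P)$ a vector, $H(P),h(P)$ a matrix and vector of compatible dimensions; inequalities are componentwise. The dual function is $d(P;\lambda):=\inf_U\{p(P;U)+\lambda^\top(H(P)U-h(P))\}=-\tfrac12 (c(P)+H(P)^\top\lambda)^\top Q(P)^{-1}(c(P)+H(P)^\top\lambda)-\lambda^\top h(P)$ for $\lambda\ge0$. In the paper $\tilde U$ is a learned approximation of the MPC optimizer (primal policy) and $\tilde\lambda$ a learned approximation of the optimal dual multiplier (dual policy). *)

theory Defs
  imports "HOL-Analysis.Analysis" "HOL-Probability.Probability"
begin

text \<open>Componentwise order on real^'n is the library order on vec.\<close>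

definition sym_pos_def :: "real^'n^'n \<Rightarrow> bool" where
  "sym_pos_def Q \<longleftrightarrow> transpose Q = Q \<and> (\<forall>x. x \<noteq> 0 \<longrightarrow> 0 < x \<bullet> (Q *v x))"

definition qp_obj :: "real^'n^'n \<Rightarrow> real^'n \<Rightarrow> real^'n \<Rightarrow> real" where
  "qp_obj Q c U = (1/2) * (U \<bullet> (Q *v U)) + c \<bullet> U"

definition qp_opt :: "real^'n^'n \<Rightarrow> real^'n \<Rightarrow> real^'n^'m \<Rightarrow> real^'m \<Rightarrow> real" where
  "qp_opt Q c H h = Inf (qp_obj Q c ` {U. H *v U \<le> h})"

text \<open>Dual function (closed form, for lambda >= 0).\<close>
definition qp_dual :: "real^'n^'n \<Rightarrow> real^'n \<Rightarrow> real^'n^'m \<Rightarrow> real^'m \<Rightarrow> real^'m \<Rightarrow> real" where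
  "qp_dual Q c H h l =
     - (1/2) * ((c + transpose H *v l) \<bullet> (matrix_inv Q *v (c + transpose H *v l))) - l \<bullet> h"

end

theory Submission
  imports Defs
begin

lemma pow_bound:
  fixes e b :: real and N :: nat
  assumes "0 < e" "e < 1" "0 < b" "b < 1" "real N \<ge> ln (1 / b) / ln (1 / (1 - e))"
  shows "(1 - e) ^ N \<le> b"
proof -
  have l: "ln (1 / (1 - e)) > 0" using assms by simp
  have "ln (1 / b) \<le> real N * ln (1 / (1 - e))"
    using assms(5) l by (simp add: divide_le_eq)
  hence "- ln b \<le> - real N * ln (1 - e)" using assms by (simp add: ln_div)
  hence "ln ((1 - e) ^ N) \<le> ln b" using assms by (simp add: ln_realpow)
  thus ?thesis using assms by simp
qed

theorem theorem1:
  fixes M :: "'p::topological_space measure"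
    and Q :: "'p \<Rightarrow> real^'n^'n" and c :: "'p \<Rightarrow> real^'n"
    and H :: "'p \<Rightarrow> real^'n^'m" and h :: "'p \<Rightarrow> real^'m"
    and Ut :: "'p \<Rightarrow> real^'n" and lt :: "'p \<Rightarrow> real^'m"
    and \<epsilon> \<beta> \<gamma> \<epsilon>p \<epsilon>d \<beta>p \<beta>d \<gamma>p \<gamma>d :: real and Np Nd :: nat
  assumes PS: "prob_space M" and cpt: "compact (space M)"
    and Qpd: "\<And>P. P \<in> space M \<Longrightarrow> sym_pos_def (Q P)"
    and feas: "\<And>P. P \<in> space M \<Longrightarrow> {U. H P *v U \<le> h P} \<noteq> {}"
    and finite_opt: "\<And>P. P \<in> space M \<Longrightarrow> bdd_below (qp_obj (Q P) (c P) ` {U. H P *v U \<le> h P})"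
    and meas_p: "{P \<in> space M. H P *v Ut P \<le> h P \<and>
                   qp_obj (Q P) (c P) (Ut P) \<le> qp_opt (Q P) (c P) (H P) (h P) + \<gamma>p} \<in> sets M"
    and meas_d: "{P \<in> space M. 0 \<le> lt P \<and>
                   qp_dual (Q P) (c P) (H P) (h P) (lt P) \<ge> qp_opt (Q P) (c P) (H P) (h P) - \<gamma>d} \<in> sets M"
    and meas_g: "{P \<in> space M. H P *v Ut P \<le> h P \<and> 0 \<le> lt P \<and>
                   qp_obj (Q P) (c P) (Ut P) - qp_dual (Q P) (c P) (H P) (h P) (lt P) \<le> \<gamma>} \<in> sets M"
    and eps: "0 < \<epsilon>" "\<epsilon> < 1" and bet: "0 < \<beta>" "\<beta> < 1" and gam: "0 < \<gamma>"
    and epsd: "0 < \<epsilon>p" "0 < \<epsilon>d" "\<epsilon>p + \<epsilon>d = \<epsilon>"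
    and betd: "0 < \<beta>p" "0 < \<beta>d" "\<beta>p + \<beta>d = \<beta>"
    and gamd: "0 < \<gamma>p" "0 < \<gamma>d" "\<gamma>p + \<gamma>d = \<gamma>"
    and Np: "real Np \<ge> ln (1 / \<beta>p) / ln (1 / (1 - \<epsilon>p))"
    and Nd: "real Nd \<ge> ln (1 / \<beta>d) / ln (1 / (1 - \<epsilon>d))"
  shows "measure (PiM {..<Np} (\<lambda>_. M) \<Otimes>\<^sub>M PiM {..<Nd} (\<lambda>_. M))
     {(xs, ys) \<in> space (PiM {..<Np} (\<lambda>_. M) \<Otimes>\<^sub>M PiM {..<Nd} (\<lambda>_. M)).
        ((\<forall>i<Np. H (xs i) *v Ut (xs i) \<le> h (xs i) \<and>
            qp_obj (Q (xs i)) (c (xs i)) (Ut (xs i))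
              \<le> qp_opt (Q (xs i)) (c (xs i)) (H (xs i)) (h (xs i)) + \<gamma>p) \<and>
         (\<forall>j<Nd. 0 \<le> lt (ys j) \<and>
            qp_dual (Q (ys j)) (c (ys j)) (H (ys j)) (h (ys j)) (lt (ys j))
              \<ge> qp_opt (Q (ys j)) (c (ys j)) (H (ys j)) (h (ys j)) - \<gamma>d))
        \<longrightarrow> measure M {P \<in> space M. H P *v Ut P \<le> h P \<and> 0 \<le> lt P \<and>
               qp_obj (Q P) (c P) (Ut P) - qp_dual (Q P) (c P) (H P) (h P) (lt P) \<le> \<gamma>} \<ge> 1 - \<epsilon>}
     \<ge> 1 - \<beta>"
proof -
  interpret M: prob_space M by (rule PS)
  define M1 where "M1 = PiM {..<Np} (\<lambda>_. M)"
  define M2 where "M2 = PiM {..<Nd} (\<lambda>_. M)"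
  define A where "A = {P \<in> space M. H P *v Ut P \<le> h P \<and>
                   qp_obj (Q P) (c P) (Ut P) \<le> qp_opt (Q P) (c P) (H P) (h P) + \<gamma>p}"
  define B where "B = {P \<in> space M. 0 \<le> lt P \<and>
                   qp_dual (Q P) (c P) (H P) (h P) (lt P) \<ge> qp_opt (Q P) (c P) (H P) (h P) - \<gamma>d}"
  define G where "G = {P \<in> space M. H P *v Ut P \<le> h P \<and> 0 \<le> lt P \<and>
               qp_obj (Q P) (c P) (Ut P) - qp_dual (Q P) (c P) (H P) (h P) (lt P) \<le> \<gamma>}"
  have Asets: "A \<in> sets M" using meas_p A_def by simp
  have Bsets: "B \<in> sets M" using meas_d B_def by simp
  have Gsets: "G \<in> sets M" using meas_g G_def by simp
  have P1: "prob_space M1" unfolding M1_def by (rule prob_space_PiM) (rule PS)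
  have P2: "prob_space M2" unfolding M2_def by (rule prob_space_PiM) (rule PS)
  interpret N: prob_space "M1 \<Otimes>\<^sub>M M2" by (rule prob_space_pair[OF P1 P2])
  interpret M1: prob_space M1 by (rule P1)
  interpret M2: prob_space M2 by (rule P2)
  interpret F1: finite_product_prob_space "\<lambda>_. M" "{..<Np}"
    by unfold_locales simp
  interpret F2: finite_product_prob_space "\<lambda>_. M" "{..<Nd}"
    by unfold_locales simp
  have ABG: "A \<inter> B \<subseteq> G" using gamd(3) unfolding A_def B_def G_def by auto
  let ?S = "{(xs, ys) \<in> space (M1 \<Otimes>\<^sub>M M2).
        ((\<forall>i<Np. H (xs i) *v Ut (xs i) \<le> h (xs i) \<and>
            qp_obj (Q (xs i)) (c (xs i)) (Ut (xs i))
              \<le> qp_opt (Q (xs i)) (c (xs i)) (H (xs i)) (h (xs i)) + \<gamma>p) \<and>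
         (\<forall>j<Nd. 0 \<le> lt (ys j) \<and>
            qp_dual (Q (ys j)) (c (ys j)) (H (ys j)) (h (ys j)) (lt (ys j))
              \<ge> qp_opt (Q (ys j)) (c (ys j)) (H (ys j)) (h (ys j)) - \<gamma>d))
        \<longrightarrow> measure M G \<ge> 1 - \<epsilon>}"
  have goal: "measure (M1 \<Otimes>\<^sub>M M2) ?S \<ge> 1 - \<beta>"
  proof (cases "measure M G \<ge> 1 - \<epsilon>")
    case True
    hence "?S = space (M1 \<Otimes>\<^sub>M M2)" by auto
    thus ?thesis using bet by (simp add: N.prob_space)
  next
    case False
    have bnd: "measure M A < 1 - \<epsilon>p \<or> measure M B < 1 - \<epsilon>d"
    proof (rule ccontr)
      assume "\<not> ?thesis"
      hence a: "measure M A \<ge> 1 - \<epsilon>p" "measure M B \<ge> 1 - \<epsilon>d" by auto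
      have "measure M (A \<union> B) \<le> 1" by (rule M.prob_le_1)
      moreover have "measure M (A \<union> B) + measure M (A \<inter> B) = measure M A + measure M B"
        using measure_Un3[of A M B] Asets Bsets by (simp add: M.fmeasurable_eq_sets)
      moreover have "measure M (A \<inter> B) \<le> measure M G"
        using ABG Gsets by (intro M.finite_measure_mono)
      ultimately show False using a False epsd(3) by linarith
    qed
    define C where "C = (Pi\<^sub>E {..<Np} (\<lambda>_. A)) \<times> (Pi\<^sub>E {..<Nd} (\<lambda>_. B))"
    have C1: "Pi\<^sub>E {..<Np} (\<lambda>_. A) \<in> sets M1" unfolding M1_def
      using Asets by (intro sets_PiM_I_finite) auto
    have C2: "Pi\<^sub>E {..<Nd} (\<lambda>_. B) \<in> sets M2" unfolding M2_def
      using Bsets by (intro sets_PiM_I_finite) auto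
    have Csets: "C \<in> sets (M1 \<Otimes>\<^sub>M M2)" unfolding C_def using C1 C2 by simp
    have key: "((\<forall>i<Np. H (xs i) *v Ut (xs i) \<le> h (xs i) \<and>
            qp_obj (Q (xs i)) (c (xs i)) (Ut (xs i))
              \<le> qp_opt (Q (xs i)) (c (xs i)) (H (xs i)) (h (xs i)) + \<gamma>p) \<and>
         (\<forall>j<Nd. 0 \<le> lt (ys j) \<and>
            qp_dual (Q (ys j)) (c (ys j)) (H (ys j)) (h (ys j)) (lt (ys j))
              \<ge> qp_opt (Q (ys j)) (c (ys j)) (H (ys j)) (h (ys j)) - \<gamma>d))
         \<longleftrightarrow> (xs, ys) \<in> C" if xy: "(xs, ys) \<in> space (M1 \<Otimes>\<^sub>M M2)" for xs ys
    proof -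
      have xs: "xs \<in> Pi\<^sub>E {..<Np} (\<lambda>_. space M)" and ys: "ys \<in> Pi\<^sub>E {..<Nd} (\<lambda>_. space M)"
        using xy by (simp_all add: space_pair_measure M1_def M2_def space_PiM)
      have e1: "xs \<in> Pi\<^sub>E {..<Np} (\<lambda>_. A) \<longleftrightarrow> (\<forall>i<Np. xs i \<in> A)"
        using xs by (auto simp: PiE_iff)
      have e2: "ys \<in> Pi\<^sub>E {..<Nd} (\<lambda>_. B) \<longleftrightarrow> (\<forall>j<Nd. ys j \<in> B)"
        using ys by (auto simp: PiE_iff)
      have xsp: "\<And>i. i < Np \<Longrightarrow> xs i \<in> space M" using xs by (auto simp: PiE_iff)
      have ysp: "\<And>j. j < Nd \<Longrightarrow> ys j \<in> space M" using ys by (auto simp: PiE_iff)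
      show ?thesis unfolding C_def mem_Times_iff fst_conv snd_conv e1 e2
        unfolding A_def B_def mem_Collect_eq using xsp ysp by blast
    qed
    have SC: "?S = space (M1 \<Otimes>\<^sub>M M2) - C"
    proof (intro set_eqI iffI)
      fix z assume "z \<in> ?S"
      then obtain xs ys where z: "z = (xs, ys)" "(xs, ys) \<in> space (M1 \<Otimes>\<^sub>M M2)" by auto
      with \<open>z \<in> ?S\<close> False key[OF z(2)] show "z \<in> space (M1 \<Otimes>\<^sub>M M2) - C" by auto
    next
      fix z assume "z \<in> space (M1 \<Otimes>\<^sub>M M2) - C"
      then obtain xs ys where z: "z = (xs, ys)" "(xs, ys) \<in> space (M1 \<Otimes>\<^sub>M M2)" "(xs, ys) \<notin> C"
        by (cases z) auto
      show "z \<in> ?S" unfolding z(1) mem_Collect_eq case_prod_conv using z(2,3) key[OF z(2)] by blast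
    qed
    have mC: "measure (M1 \<Otimes>\<^sub>M M2) C = measure M A ^ Np * measure M B ^ Nd"
    proof -
      have "emeasure (M1 \<Otimes>\<^sub>M M2) C = emeasure M1 (Pi\<^sub>E {..<Np} (\<lambda>_. A)) * emeasure M2 (Pi\<^sub>E {..<Nd} (\<lambda>_. B))"
        unfolding C_def by (rule M2.emeasure_pair_measure_Times[OF C1 C2])
      moreover have "measure M1 (Pi\<^sub>E {..<Np} (\<lambda>_. A)) = measure M A ^ Np"
        unfolding M1_def using F1.prob_times[of "\<lambda>_. A"] Asets by simp
      moreover have "measure M2 (Pi\<^sub>E {..<Nd} (\<lambda>_. B)) = measure M B ^ Nd"
        unfolding M2_def using F2.prob_times[of "\<lambda>_. B"] Bsets by simp
      ultimately show ?thesis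
        by (simp add: N.emeasure_eq_measure M1.emeasure_eq_measure M2.emeasure_eq_measure ennreal_mult''[symmetric])
    qed
    have a0: "0 \<le> measure M A" "measure M A \<le> 1" "0 \<le> measure M B" "measure M B \<le> 1" by auto
    have pA: "(1 - \<epsilon>p) ^ Np \<le> \<beta>p" using pow_bound epsd eps betd bet Np by simp
    have pB: "(1 - \<epsilon>d) ^ Nd \<le> \<beta>d" using pow_bound epsd eps betd bet Nd by simp
    have "measure M A ^ Np * measure M B ^ Nd \<le> \<beta>"
    proof (cases "measure M A < 1 - \<epsilon>p")
      case True
      have "measure M A ^ Np \<le> (1 - \<epsilon>p) ^ Np" using True a0 by (intro power_mono) auto
      moreover have "measure M B ^ Nd \<le> 1" using a0 by (simp add: power_le_one)
      ultimately have "measure M A ^ Np * measure M B ^ Nd \<le> (1 - \<epsilon>p) ^ Np"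
        using a0 mult_mono[of "measure M A ^ Np" "(1 - \<epsilon>p) ^ Np" "measure M B ^ Nd" 1] epsd eps by simp
      thus ?thesis using pA betd by linarith
    next
      case F: False
      hence T: "measure M B < 1 - \<epsilon>d" using bnd by auto
      have "measure M B ^ Nd \<le> (1 - \<epsilon>d) ^ Nd" using T a0 by (intro power_mono) auto
      moreover have "measure M A ^ Np \<le> 1" using a0 by (simp add: power_le_one)
      ultimately have "measure M A ^ Np * measure M B ^ Nd \<le> (1 - \<epsilon>d) ^ Nd"
        using a0 mult_mono[of "measure M A ^ Np" 1 "measure M B ^ Nd" "(1 - \<epsilon>d) ^ Nd"] by simp
      thus ?thesis using pB betd by linarith
    qed
    thus ?thesis unfolding SC using N.prob_compl[OF Csets] mC by simp
  qed
  thus ?thesis unfolding M1_def M2_def G_def .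
qed

end
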